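(* Let $\alpha\in(0,1)$, $\sigma=1-\frac{\alpha}{2}$, and let $c^{(\alpha,\sigma)}_{i,k}$ be the L2-1$_\sigma$ coefficients defined in the context. Then for every $k\ge 0$, $$\frac{1}{c^{(\alpha,\sigma)}_{1,k}}<\frac{2\Gamma(1-\alpha)}{\tilde a^{\alpha}}\big((k+\sigma)\tau\big)^{\alpha}.$$
   Context: Let $\tilde a>0$, $T>\tilde a$, $N\in\mathbb{Z}^+$, $\tau=(T-\tilde a)/N$, $t_k=\tilde a+k\tau$ ($k=0,\dots,N$), and $t_{k+\sigma}=t_k+\sigma\tau$. For $1\le i\le k$ define $$a^{(\alpha,\sigma)}_{i,k}=\Big(\log\tfrac{t_{k+\sigma}}{t_{i-1}}\Big)^{1-\alpha}-\Big(\log\tfrac{t_{k+\sigma}}{t_{i}}\Big)^{1-\alpha},$$ $$b^{(\alpha,\sigma)}_{i,k}=\frac{1}{\log\frac{t_{i+1}}{t_{i-1}}}\Big\{\tfrac{2}{2-\alpha}\Big[\Big(\log\tfrac{t_{k+\sigma}}{t_{i-1}}\Big)^{2-\alpha}-\Big(\log\tfrac{t_{k+\sigma}}{t_{i}}\Big)^{2-\alpha}\Big]-\log\tfrac{t_i}{t_{i-1}}\Big[\Big(\log\tfrac{t_{k+\sigma}}{t_{i}}\Big)^{1-\alpha}+\Big(\log\tfrac{t_{k+\sigma}}{t_{i-1}}\Big)^{1-\alpha}\Big]\Big\}.$$ The coefficients are: $c^{(\alpha,\sigma)}_{1,0}=\frac{1}{\Gamma(2-\alpha)\log\frac{t_1}{t_0}}\big(\log\frac{t_\sigma}{t_0}\big)^{1-\alpha}$;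 for $k=1$: $c^{(\alpha,\sigma)}_{1,1}=\frac{a^{(\alpha,\sigma)}_{1,1}-b^{(\alpha,\sigma)}_{1,1}}{\Gamma(2-\alpha)\log\frac{t_1}{t_0}}$, $c^{(\alpha,\sigma)}_{2,1}=\frac{b^{(\alpha,\sigma)}_{1,1}+(\log\frac{t_{1+\sigma}}{t_1})^{1-\alpha}}{\Gamma(2-\alpha)\log\frac{t_2}{t_1}}$; for $k\ge2$: $c^{(\alpha,\sigma)}_{1,k}=\frac{a^{(\alpha,\sigma)}_{1,k}-b^{(\alpha,\sigma)}_{1,k}}{\Gamma(2-\alpha)\log\frac{t_1}{t_0}}$, $c^{(\alpha,\sigma)}_{i,k}=\frac{a^{(\alpha,\sigma)}_{i,k}+b^{(\alpha,\sigma)}_{i-1,k}-b^{(\alpha,\sigma)}_{i,k}}{\Gamma(2-\alpha)\log\frac{t_i}{t_{i-1}}}$ for $2\le i\le k$, and $c^{(\alpha,\sigma)}_{k+1,k}=\frac{b^{(\alpha,\sigma)}_{k,k}+(\log\frac{t_{k+\sigma}}{t_k})^{1-\alpha}}{\Gamma(2-\alpha)\log\frac{t_{k+1}}{t_k}}$. *)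

theory Defs
  imports "HOL-Analysis.Analysis"
begin

definition tau :: "real \<Rightarrow> real \<Rightarrow> nat \<Rightarrow> real" where
  "tau a T N = (T - a) / real N"

definition tpt :: "real \<Rightarrow> real \<Rightarrow> nat \<Rightarrow> real \<Rightarrow> real" where
  "tpt a T N s = a + s * tau a T N"

definition acoef :: "real \<Rightarrow> real \<Rightarrow> real \<Rightarrow> real \<Rightarrow> nat \<Rightarrow> nat \<Rightarrow> nat \<Rightarrow> real" where
  "acoef \<alpha> \<sigma> a T N i k =
     (ln (tpt a T N (real k + \<sigma>) / tpt a T N (real i - 1))) powr (1 - \<alpha>)
   - (ln (tpt a T N (real k + \<sigma>) / tpt a T N (real i))) powr (1 - \<alpha>)"

definition bcoef :: "real \<Rightarrow> real \<Rightarrow> real \<Rightarrow> real \<Rightarrow> nat \<Rightarrow> nat \<Rightarrow> nat \<Rightarrow> real" where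
  "bcoef \<alpha> \<sigma> a T N i k =
     (1 / ln (tpt a T N (real i + 1) / tpt a T N (real i - 1))) *
     ( (2 / (2 - \<alpha>)) *
         ( (ln (tpt a T N (real k + \<sigma>) / tpt a T N (real i - 1))) powr (2 - \<alpha>)
         - (ln (tpt a T N (real k + \<sigma>) / tpt a T N (real i))) powr (2 - \<alpha>))
     - ln (tpt a T N (real i) / tpt a T N (real i - 1)) *
         ( (ln (tpt a T N (real k + \<sigma>) / tpt a T N (real i))) powr (1 - \<alpha>)
         + (ln (tpt a T N (real k + \<sigma>) / tpt a T N (real i - 1))) powr (1 - \<alpha>)))"

text \<open>The L2-1_sigma coefficients c_{i,k} (meaningful for 1 <= i <= k+1).\<close>
definition ccoef :: "real \<Rightarrow> real \<Rightarrow> real \<Rightarrow> real \<Rightarrow> nat \<Rightarrow> nat \<Rightarrow> nat \<Rightarrow> real" where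
  "ccoef \<alpha> \<sigma> a T N i k =
    (let t = tpt a T N; G = Gamma (2 - \<alpha>) in
     if k = 0 then
       (if i = 1 then (ln (t \<sigma> / t 0)) powr (1 - \<alpha>) / (G * ln (t 1 / t 0)) else 0)
     else if i = 1 then
       (acoef \<alpha> \<sigma> a T N 1 k - bcoef \<alpha> \<sigma> a T N 1 k) / (G * ln (t 1 / t 0))
     else if i \<le> k then
       (acoef \<alpha> \<sigma> a T N i k + bcoef \<alpha> \<sigma> a T N (i - 1) k - bcoef \<alpha> \<sigma> a T N i k)
         / (G * ln (t (real i) / t (real i - 1)))
     else if i = k + 1 then
       (bcoef \<alpha> \<sigma> a T N k k + (ln (t (real k + \<sigma>) / t (real k))) powr (1 - \<alpha>))
         / (G * ln (t (real k + 1) / t (real k)))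
     else 0)"

end

theory Submission imports Defs begin

lemma bern:
  fixes y p :: real
  assumes "0 < y" "0 \<le> p" "p \<le> 1"
  shows "y powr p \<le> 1 + p * (y - 1)"
proof -
  have "exp ((1 - p) *\<^sub>R 0 + p *\<^sub>R ln y) \<le> (1 - p) * exp 0 + p * exp (ln y)"
    using convex_onD[OF exp_convex, of p 0 "ln y"] assms by auto
  then show ?thesis using assms by (simp add: powr_def algebra_simps)
qed

lemma gnn:
  fixes x \<alpha> :: real
  assumes "0 < x" "x \<le> 1" "0 < \<alpha>" "\<alpha> < 1"
  shows "x powr (2 - \<alpha>) - 1 - (2 - \<alpha>) * (x - 1) - (2 - \<alpha>) * (1 - \<alpha>) / 2 * (x - 1)^2 \<ge> 0"
proof -
  define f where "f = (\<lambda>x::real. x powr (2 - \<alpha>) - 1 - (2 - \<alpha>) * (x - 1) - (2 - \<alpha>) * (1 - \<alpha>) / 2 * (x - 1)^2)"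
  have der: "DERIV f z :> (2 - \<alpha>) * (z powr (1 - \<alpha>) - 1 - (1 - \<alpha>) * (z - 1))" if "0 < z" for z
  proof -
    have "DERIV f z :> (2 - \<alpha>) * z powr (2 - \<alpha> - 1) - (2 - \<alpha>) - (2 - \<alpha>) * (1 - \<alpha>) / 2 * (2 * (z - 1))"
      unfolding f_def using that
      by (auto intro!: derivative_eq_intros)
    then show ?thesis
      by (rule DERIV_cong) (simp add: field_simps)
  qed
  have "f 1 \<le> f x"
  proof (rule DERIV_nonpos_imp_decreasing_open[OF assms(2)])
    fix z assume z: "x < z" "z < 1"
    have "z powr (1 - \<alpha>) \<le> 1 + (1 - \<alpha>) * (z - 1)" using bern[of z "1 - \<alpha>"] z assms by auto
    then show "\<exists>y. DERIV f z :> y \<and> y \<le> 0"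
      using der[of z] z assms by (intro exI[of _ "(2 - \<alpha>) * (z powr (1 - \<alpha>) - 1 - (1 - \<alpha>) * (z - 1))"])
        (auto intro!: mult_nonneg_nonpos)
  next
    show "continuous_on {x..1} f"
      using der assms by (intro DERIV_atLeastAtMost_imp_continuous_on) (use less_le_trans in blast)
  qed
  moreover have "f 1 = 0" by (simp add: f_def)
  ultimately show ?thesis by (simp add: f_def)
qed

lemma rhs_eq:
  fixes a X G \<alpha> :: real
  assumes "0 < a" "0 \<le> X"
  shows "2 * G / a powr \<alpha> * X powr \<alpha> = 2 * G * (X / a) powr \<alpha>"
  using assms by (simp add: powr_divide)

lemma Gamma2:
  fixes \<alpha> :: real
  assumes "\<alpha> < 1"
  shows "Gamma (2 - \<alpha>) = (1 - \<alpha>) * Gamma (1 - \<alpha>)" "Gamma (1 - \<alpha>) > 0"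
proof -
  have "Gamma (2 - \<alpha>) = Gamma ((1 - \<alpha>) + 1)" by (simp add: algebra_simps)
  also have "\<dots> = (1 - \<alpha>) * Gamma (1 - \<alpha>)" using assms by (intro Gamma_plus1) (auto dest: nonpos_Ints_nonpos)
  finally show "Gamma (2 - \<alpha>) = (1 - \<alpha>) * Gamma (1 - \<alpha>)" .
  show "Gamma (1 - \<alpha>) > 0" using assms by (intro Gamma_real_pos) simp
qed

theorem lemma2p3:
  fixes \<alpha> \<sigma> a T :: real and N k :: nat
  assumes "0 < \<alpha>" "\<alpha> < 1" "\<sigma> = 1 - \<alpha> / 2"
    and "0 < a" "a < T" "0 < N" "k < N"
  shows "1 / ccoef \<alpha> \<sigma> a T N 1 k
         < 2 * Gamma (1 - \<alpha>) / a powr \<alpha> * ((real k + \<sigma>) * tau a T N) powr \<alpha>"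
proof -
  define \<tau> where "\<tau> = tau a T N"
  have tau_pos: "\<tau> > 0" using assms by (simp add: \<tau>_def tau_def)
  define t where "t = tpt a T N"
  have t_eq: "t s = a + s * \<tau>" for s by (simp add: t_def tpt_def \<tau>_def)
  have sig: "0 < \<sigma>" "\<sigma> < 1" using assms by auto
  define G1 where "G1 = Gamma (1 - \<alpha>)"
  have G: "Gamma (2 - \<alpha>) = (1 - \<alpha>) * G1" "G1 > 0" using Gamma2[OF assms(2)] by (auto simp: G1_def)
  define X where "X = (real k + \<sigma>) * \<tau> / a"
  have Xpos: "X > 0" using sig tau_pos assms by (simp add: X_def)
  have rhs: "2 * Gamma (1 - \<alpha>) / a powr \<alpha> * ((real k + \<sigma>) * tau a T N) powr \<alpha> = 2 * G1 * X powr \<alpha>"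
    unfolding X_def G1_def \<tau>_def[symmetric] using assms sig tau_pos by (intro rhs_eq) auto
  have tk0: "t (real k + \<sigma>) / t 0 = 1 + X" using assms by (simp add: t_eq X_def field_simps)
  have AleX: "ln (t (real k + \<sigma>) / t 0) \<le> X" using tk0 Xpos by (simp add: ln_add_one_self_le_self)
  show ?thesis
  proof (cases "k = 0")
    case True
    define x where "x = \<tau> / a"
    have xpos: "x > 0" using tau_pos assms by (simp add: x_def)
    have e1: "t 1 / t 0 = 1 + x" using assms by (simp add: t_eq x_def field_simps)
    have e2: "t \<sigma> / t 0 = 1 + \<sigma> * x" using assms by (simp add: t_eq x_def field_simps)
    define L1 where "L1 = ln (1 + x)"
    define Ls where "Ls = ln (1 + \<sigma> * x)"
    have L1pos: "L1 > 0" using xpos by (simp add: L1_def)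
    have Lspos: "Ls > 0" using xpos sig unfolding Ls_def by (intro ln_gt_zero) auto
    have "(1 + x) powr \<sigma> \<le> 1 + \<sigma> * x" using bern[of "1 + x" \<sigma>] xpos sig by auto
    hence "ln ((1 + x) powr \<sigma>) \<le> Ls" unfolding Ls_def using xpos sig by (subst ln_le_cancel_iff) (auto simp: add_pos_pos)
    hence sL: "\<sigma> * L1 \<le> Ls" using xpos by (simp add: ln_powr L1_def)
    have LsX: "Ls \<le> X" using AleX True e2 by (simp add: Ls_def)
    have c: "ccoef \<alpha> \<sigma> a T N 1 k = Ls powr (1 - \<alpha>) / ((1 - \<alpha>) * G1 * L1)"
      using True by (simp add: ccoef_def t_def[symmetric] e1 e2 G Ls_def L1_def)
    have Lsplit: "Ls = Ls powr (1 - \<alpha>) * Ls powr \<alpha>" using Lspos by (simp add: powr_add[symmetric])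
    have "1 / ccoef \<alpha> \<sigma> a T N 1 k = (1 - \<alpha>) * G1 * L1 / Ls powr (1 - \<alpha>)" using c by simp
    also have "\<dots> \<le> (1 - \<alpha>) * G1 * (Ls / \<sigma>) / Ls powr (1 - \<alpha>)"
    proof -
      have "L1 \<le> Ls / \<sigma>" using sL sig by (simp add: field_simps)
      moreover have "0 \<le> (1 - \<alpha>) * G1" using G(2) assms(2) by simp
      ultimately show ?thesis using Lspos by (intro divide_right_mono mult_left_mono) auto
    qed
    also have "\<dots> = ((1 - \<alpha>) / \<sigma>) * G1 * Ls powr \<alpha>"
    proof -
      have "Ls powr \<alpha> = Ls powr (1 - (1 - \<alpha>))" by simp
      also have "\<dots> = Ls / Ls powr (1 - \<alpha>)" using Lspos by (simp add: powr_diff)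
      finally have Ld: "Ls / Ls powr (1 - \<alpha>) = Ls powr \<alpha>" by simp
      have "(1 - \<alpha>) * G1 * (Ls / \<sigma>) / Ls powr (1 - \<alpha>) = ((1 - \<alpha>) / \<sigma>) * G1 * (Ls / Ls powr (1 - \<alpha>))"
        by simp
      then show ?thesis using Ld by simp
    qed
    also have "\<dots> \<le> ((1 - \<alpha>) / \<sigma>) * G1 * X powr \<alpha>"
      using LsX Lspos sig G assms by (intro mult_left_mono powr_mono2) auto
    also have "\<dots> < 2 * G1 * X powr \<alpha>"
    proof -
      have "(1 - \<alpha>) / \<sigma> < 2" using assms sig by (simp add: field_simps)
      thus ?thesis using G Xpos by (intro mult_strict_right_mono) auto
    qed
    finally show ?thesis using rhs by simp
  next
    case False
    hence k1: "real k \<ge> 1" by simp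
    have tp: "t 0 > 0" "t 1 > t 0" "t 2 > t 1" "t (real k + \<sigma>) > t 1"
      using assms tau_pos sig k1 by (auto simp: t_eq intro!: mult_strict_right_mono)
    define A where "A = ln (t (real k + \<sigma>) / t 0)"
    define B where "B = ln (t (real k + \<sigma>) / t 1)"
    define D where "D = ln (t 1 / t 0)"
    define H where "H = ln (t 2 / t 0)"
    have Bpos: "B > 0" unfolding B_def using tp by (intro ln_gt_zero) auto
    have Dpos: "D > 0" unfolding D_def using tp by (intro ln_gt_zero) auto
    have DAB: "D = A - B" unfolding A_def B_def D_def using tp by (simp add: ln_div)
    have HD: "H > D" unfolding H_def D_def using tp by (subst ln_less_cancel_iff) (auto intro!: divide_strict_right_mono)
    have ApB: "A > B" using DAB Dpos by simp
    have Apos: "A > 0" using ApB Bpos by simp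
    define x where "x = B / A"
    have x: "0 < x" "x < 1" using Apos Bpos ApB by (auto simp: x_def)
    have Bx: "B = A * x" using Apos by (simp add: x_def)
    define Y where "Y = A powr (1 - \<alpha>)"
    have Ypos: "Y > 0" using Apos by (simp add: Y_def)
    define p1 where "p1 = x powr (1 - \<alpha>)"
    define p2 where "p2 = x powr (2 - \<alpha>)"
    have Bp1: "B powr (1 - \<alpha>) = Y * p1" using Apos x by (simp add: Bx powr_mult Y_def p1_def)
    have A2: "A powr (2 - \<alpha>) = Y * A"
    proof -
      have "A powr (2 - \<alpha>) = A powr ((1 - \<alpha>) + 1)" by (simp add: algebra_simps)
      also have "\<dots> = A powr (1 - \<alpha>) * A powr 1" by (rule powr_add)
      finally show ?thesis using Apos by (simp add: Y_def)
    qed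
    have x2: "p2 = p1 * x"
    proof -
      have "x powr (2 - \<alpha>) = x powr ((1 - \<alpha>) + 1)" by (simp add: algebra_simps)
      also have "\<dots> = x powr (1 - \<alpha>) * x powr 1" by (rule powr_add)
      finally show ?thesis using x by (simp add: p1_def p2_def)
    qed
    have Bp2: "B powr (2 - \<alpha>) = Y * A * p2" using Apos x A2 by (simp add: Bx powr_mult p2_def)
    have Am: "A powr \<alpha> = A / Y"
    proof -
      have "A powr \<alpha> = A powr (1 - (1 - \<alpha>))" by simp
      also have "\<dots> = A / Y" using Apos by (simp add: powr_diff Y_def)
      finally show ?thesis .
    qed
    have ac: "acoef \<alpha> \<sigma> a T N 1 k = Y - Y * p1"
      by (simp add: acoef_def t_def[symmetric] A_def[symmetric] B_def[symmetric] Y_def[symmetric] Bp1[symmetric])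
    define P where "P = (2 / (2 - \<alpha>)) * (Y * A - Y * A * p2) - D * (Y * p1 + Y)"
    have Bp2': "B powr (2 - \<alpha>) = A powr (2 - \<alpha>) * p2" using Apos x by (simp add: Bx powr_mult p2_def)
    have bc: "bcoef \<alpha> \<sigma> a T N 1 k = P / H"
      by (simp add: bcoef_def t_def[symmetric] A_def[symmetric] B_def[symmetric] D_def[symmetric]
          H_def[symmetric] Y_def[symmetric] Bp1[symmetric] Bp2' A2[symmetric] P_def)
    define m where "m = (1 - \<alpha>) * D * Y / A"
    have bern1: "p1 \<le> 1 + (1 - \<alpha>) * (x - 1)" unfolding p1_def using bern[of x "1 - \<alpha>"] x assms by auto
    have g: "p2 - 1 - (2 - \<alpha>) * (x - 1) - (2 - \<alpha>) * (1 - \<alpha>) / 2 * (x - 1)^2 \<ge> 0"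
      unfolding p2_def using gnn[of x \<alpha>] x assms by auto
    have am: "Y - Y * p1 \<ge> m"
    proof -
      have DA: "D = A * (1 - x)" using DAB Bx by (simp add: algebra_simps)
      have "m = Y * ((1 - \<alpha>) * (1 - x))" unfolding m_def DA using Apos by (simp add: field_simps)
      moreover have "(1 - \<alpha>) * (1 - x) \<le> 1 - p1" using bern1 by (simp add: algebra_simps)
      moreover have "Y - Y * p1 = Y * (1 - p1)" by (simp add: algebra_simps)
      ultimately show ?thesis using Ypos by (simp add: mult_left_mono)
    qed
    have qm: "Y - Y * p1 - P / D \<ge> m"
    proof -
      have DA: "D = A * (1 - x)" using DAB Bx by (simp add: algebra_simps)
      have "Y - Y * p1 - P / D = Y * (2 - 2 * (1 - p2) / ((2 - \<alpha>) * (1 - x)))"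
      proof -
        have nz: "1 - x \<noteq> 0" "2 - \<alpha> \<noteq> 0" "A \<noteq> 0" using x assms Apos by auto
        have gen: "((2 / v) * (Y * A - Y * A * p2) - A * u * (Y * p1 + Y)) / (A * u)
           = 2 * Y * (1 - p2) / (v * u) - Y * (1 + p1)" if "u \<noteq> 0" "v \<noteq> 0" for u v
          using that nz(3) by (simp add: field_simps)
        have "P / D = 2 * Y * (1 - p2) / ((2 - \<alpha>) * (1 - x)) - Y * (1 + p1)"
          unfolding P_def DA using gen[OF nz(1) nz(2)] by simp
        thus ?thesis by (simp add: algebra_simps)
      qed
      moreover have "m = Y * ((1 - \<alpha>) * (1 - x))" unfolding m_def DA using Apos by (simp add: field_simps)
      moreover have "(1 - \<alpha>) * (1 - x) \<le> 2 - 2 * (1 - p2) / ((2 - \<alpha>) * (1 - x))"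
      proof -
        have pos: "(2 - \<alpha>) * (1 - x) > 0" using x assms by simp
        have "(1 - \<alpha>) * (1 - x) * ((2 - \<alpha>) * (1 - x)) \<le> 2 * ((2 - \<alpha>) * (1 - x)) - 2 * (1 - p2)"
        proof -
          have g2: "2 * p2 - 2 - 2 * (2 - \<alpha>) * (x - 1) - (2 - \<alpha>) * (1 - \<alpha>) * (x - 1)^2 \<ge> 0"
          proof -
            define Q where "Q = (2 - \<alpha>) * (1 - \<alpha>) * (x - 1)^2"
            define R where "R = (2 - \<alpha>) * (x - 1)"
            have e1: "(2 - \<alpha>) * (1 - \<alpha>) / 2 * (x - 1)^2 = Q / 2" by (simp add: Q_def)
            have e2: "2 * (2 - \<alpha>) * (x - 1) = 2 * R" by (simp add: R_def)
            have "0 \<le> p2 - 1 - R - Q / 2" using g unfolding e1 R_def[symmetric] .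
            thus ?thesis unfolding e2 Q_def[symmetric] by linarith
          qed
          then show ?thesis by (simp add: power2_eq_square algebra_simps)
        qed
        thus ?thesis using pos by (simp add: field_simps)
      qed
      ultimately show ?thesis using Ypos by (simp add: mult_left_mono)
    qed
    have mpos: "m > 0" using assms Dpos Ypos Apos by (simp add: m_def)
    have abm: "Y - Y * p1 - P / H \<ge> m"
    proof (cases "P \<ge> 0")
      case True
      hence "P / H \<le> P / D" using HD Dpos by (intro divide_left_mono) auto
      thus ?thesis using qm by simp
    next
      case False
      hence "P / H < 0" using HD Dpos by (simp add: divide_neg_pos)
      thus ?thesis using am by simp
    qed
    have c: "ccoef \<alpha> \<sigma> a T N 1 k = (Y - Y * p1 - P / H) / ((1 - \<alpha>) * G1 * D)"
          proof -
      have "ccoef \<alpha> \<sigma> a T N 1 k = (acoef \<alpha> \<sigma> a T N 1 k - bcoef \<alpha> \<sigma> a T N 1 k) / (Gamma (2 - \<alpha>) * D)"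
        unfolding ccoef_def Let_def D_def t_def using False by simp
      thus ?thesis unfolding ac bc G by simp
    qed
    have cpos: "(1 - \<alpha>) * G1 * D > 0" using assms G Dpos by simp
    have "1 / ccoef \<alpha> \<sigma> a T N 1 k = (1 - \<alpha>) * G1 * D / (Y - Y * p1 - P / H)" using c by simp
    also have "\<dots> \<le> (1 - \<alpha>) * G1 * D / m"
      using abm mpos cpos by (intro divide_left_mono) auto
    also have "\<dots> = G1 * A powr \<alpha>" using assms Dpos Ypos Apos by (simp add: m_def Am field_simps)
    also have "\<dots> \<le> G1 * X powr \<alpha>"
      using AleX Apos G assms by (intro mult_left_mono powr_mono2) (auto simp: A_def)
    also have "\<dots> < 2 * G1 * X powr \<alpha>" using G Xpos by simp
    finally show ?thesis using rhs by simp
  qed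
qed

end
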